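(* Let $X$ and $Y$ be Banach spaces and $f\colon X\to Y$ a coarse map (i.e. $\omega_f(t)<\infty$ for all $t\ge0$). Then there exist an index set $I$, a nonprincipal ultrafilter $\mathcal U$ on $I$, and a map $F\colon X\to \ell_1(Y)^I/\mathcal U$ such that for all $x,y\in X$, $$\rho_f(\|x-y\|)\le\|F(x)-F(y)\|\le\omega_f(\|x-y\|)\quad\text{and}\quad \|F(x)-F(y)\|=\|F(x-y)\|.$$
   Context: $\omega_f(t)=\sup\{\|f(x)-f(y)\|:\|x-y\|\le t\}$, $\rho_f(t)=\inf\{\|f(x)-f(y)\|:\|x-y\|\ge t\}$. $\ell_1(Y)$ is the $\ell_1$-sum of countably many copies of $Y$. For a Banach space $Z$, an index set $I$ and a nonprincipal ultrafilter $\mathcal U$ on $I$, the ultrapower $Z^I/\mathcal U$ is the space of norm-bounded families $(z_i)_{i\in I}$ modulo $(z_i)\sim(w_i)$ iff $\lim_{i,\mathcal U}\|z_i-w_i\|=0$, with norm $\lim_{i,\mathcal U}\|z_i\|$. *)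

theory Defs
  imports "HOL-Analysis.Analysis"
begin

definition omega_mod :: "('a::real_normed_vector \<Rightarrow> 'b::real_normed_vector) \<Rightarrow> real \<Rightarrow> real" where
  "omega_mod f t = Sup {norm (f x - f y) | x y. norm (x - y) \<le> t}"

definition rho_mod :: "('a::real_normed_vector \<Rightarrow> 'b::real_normed_vector) \<Rightarrow> real \<Rightarrow> real" where
  "rho_mod f t = Inf {norm (f x - f y) | x y. norm (x - y) \<ge> t}"

definition coarse_map :: "('a::real_normed_vector \<Rightarrow> 'b::real_normed_vector) \<Rightarrow> bool" where
  "coarse_map f \<longleftrightarrow> (\<forall>t\<ge>0. bdd_above {norm (f x - f y) | x y. norm (x - y) \<le> t})"

definition l1_sum :: "(nat \<Rightarrow> 'b::real_normed_vector) set" where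
  "l1_sum = {z. summable (\<lambda>n. norm (z n))}"

definition l1_norm :: "(nat \<Rightarrow> 'b::real_normed_vector) \<Rightarrow> real" where
  "l1_norm z = (\<Sum>n. norm (z n))"

definition ultrafilter_on :: "'i set \<Rightarrow> 'i filter \<Rightarrow> bool" where
  "ultrafilter_on I U \<longleftrightarrow> U \<noteq> bot \<and> eventually (\<lambda>i. i \<in> I) U \<and>
     (\<forall>P. eventually P U \<or> eventually (\<lambda>i. \<not> P i) U)"

definition nonprincipal :: "'i filter \<Rightarrow> bool" where
  "nonprincipal U \<longleftrightarrow> (\<forall>j. eventually (\<lambda>i. i \<noteq> j) U)"

text \<open>Representatives of elements of the ultrapower ell_1(Y)^I / U:
  norm-bounded families indexed by I.\<close>
definition ultrapower_reps :: "'i set \<Rightarrow> ('i \<Rightarrow> nat \<Rightarrow> 'b::real_normed_vector) set" where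
  "ultrapower_reps I = {g. (\<forall>i\<in>I. g i \<in> l1_sum) \<and> (\<exists>B. \<forall>i\<in>I. l1_norm (g i) \<le> B)}"

definition ultrapower_norm :: "'i filter \<Rightarrow> ('i \<Rightarrow> nat \<Rightarrow> 'b::real_normed_vector) \<Rightarrow> real" where
  "ultrapower_norm U g = Lim U (\<lambda>i. l1_norm (g i))"

end

theory Submission imports Defs begin
lemma extend_filter': "frequently P F \<Longrightarrow> inf F (principal {x. P x}) \<noteq> bot"
  by (simp add: trivial_limit_def eventually_inf_principal not_eventually)

lemma max_filter_ultra:
  assumes "F \<noteq> bot"
  assumes max: "\<And>G. G \<noteq> bot \<Longrightarrow> G \<le> F \<Longrightarrow> F = G"
  shows "eventually P F \<or> eventually (\<lambda>x. \<not> P x) F"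
proof (rule disjCI)
  assume "\<not> (\<forall>\<^sub>Fx in F. \<not> P x)"
  then have "inf F (principal {x. P x}) \<noteq> bot"
    by (simp add: not_eventually extend_filter')
  then have F: "F = inf F (principal {x. P x})"
    by (rule max) simp
  show "eventually P F"
    by (subst F) (simp add: eventually_inf_principal)
qed

lemma ex_ultra:
  fixes F :: "'a filter"
  assumes F: "F \<noteq> bot"
  shows "\<exists>U\<le>F. U \<noteq> bot \<and> (\<forall>P. eventually P U \<or> eventually (\<lambda>x. \<not> P x) U)"
proof -
  let ?X = "{G. G \<noteq> bot \<and> G \<le> F}"
  let ?R = "{(b, a). a \<noteq> bot \<and> a \<le> b \<and> b \<le> F}"
  have bot_notin_R: "c \<in> Chains ?R \<Longrightarrow> bot \<notin> c" for c
    by (auto simp: Chains_def)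
  have [simp]: "Field ?R = ?X"
    by (auto simp: Field_def bot_unique)
  have "\<exists>m\<in>Field ?R. \<forall>a\<in>Field ?R. (m, a) \<in> ?R \<longrightarrow> a = m" (is "\<exists>m\<in>?A. ?B m")
  proof (rule Zorns_po_lemma)
    show "Partial_order ?R"
      by (auto simp: partial_order_on_def preorder_on_def
          antisym_def refl_on_def trans_def Field_def bot_unique)
    show "\<exists>u\<in>Field ?R. \<forall>a\<in>C. (a, u) \<in> ?R" if C: "C \<in> Chains ?R" for C
    proof (simp, intro exI conjI ballI)
      have Inf_C: "Inf C \<noteq> bot" "Inf C \<le> F" if "C \<noteq> {}"
      proof -
        from C that have "Inf C = bot \<longleftrightarrow> (\<exists>x\<in>C. x = bot)"
          unfolding trivial_limit_def by (intro eventually_Inf_base) (auto simp: Chains_def)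
        with C show "Inf C \<noteq> bot"
          by (simp add: bot_notin_R)
        from that obtain x where "x \<in> C" by auto
        with C show "Inf C \<le> F"
          by (auto intro!: Inf_lower2[of x] simp: Chains_def)
      qed
      then have [simp]: "inf F (Inf C) = (if C = {} then F else Inf C)"
        using C by (auto simp add: inf_absorb2)
      from C show "inf F (Inf C) \<noteq> bot"
        by (simp add: F Inf_C)
      from C show "inf F (Inf C) \<le> F"
        by (simp add: Chains_def Inf_C F)
      with C show "inf F (Inf C) \<le> x" "x \<le> F" if "x \<in> C" for x
        using that  by (auto intro: Inf_lower simp: Chains_def)
    qed
  qed
  then obtain U where U: "U \<in> ?A" "?B U" ..
  have "U \<le> F" "U \<noteq> bot" using U(1) by auto
  moreover have "\<forall>P. eventually P U \<or> eventually (\<lambda>x. \<not> P x) U"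
    using U by (intro allI max_filter_ultra) auto
  ultimately show ?thesis by blast
qed

lemma ultra_tendsto:
  fixes g :: "'i \<Rightarrow> real"
  assumes nb: "U \<noteq> bot" and ultra: "\<forall>P. eventually P U \<or> eventually (\<lambda>x. \<not> P x) U"
    and bd: "eventually (\<lambda>i. \<bar>g i\<bar> \<le> B) U"
  shows "(g \<longlongrightarrow> Lim U g) U"
proof -
  have cpt: "compact {-B..B}" by simp
  have "filtermap g U \<noteq> bot" using nb by (simp add: filtermap_bot_iff)
  moreover have "eventually (\<lambda>x. x \<in> {-B..B}) (filtermap g U)"
    using bd by (simp add: eventually_filtermap abs_le_iff) (auto elim: eventually_mono)
  ultimately obtain L where L: "inf (nhds L) (filtermap g U) \<noteq> bot"
    using cpt unfolding compact_filter by blast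
  have "(g \<longlongrightarrow> L) U"
  proof (rule topological_tendstoI)
    fix S assume S: "open S" "L \<in> S"
    show "eventually (\<lambda>i. g i \<in> S) U"
    proof (rule ccontr)
      assume "\<not> eventually (\<lambda>i. g i \<in> S) U"
      then have "eventually (\<lambda>i. g i \<notin> S) U" using ultra by blast
      then have e2: "eventually (\<lambda>x. x \<notin> S) (filtermap g U)" by (simp add: eventually_filtermap)
      have e1: "eventually (\<lambda>x. x \<in> S) (nhds L)" using S eventually_nhds by blast
      have "eventually (\<lambda>x. False) (inf (nhds L) (filtermap g U))"
        unfolding eventually_inf using e1 e2 by blast
      then show False using L by (simp add: trivial_limit_def)
    qed
  qed
  then show ?thesis using tendsto_Lim nb by (metis)
qed

fun pts :: "nat \<Rightarrow> 'a::real_vector list \<Rightarrow> 'a list" where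
  "pts N [] = [0]"
| "pts N (s # L) = concat (map (\<lambda>j. map (\<lambda>p. p + real j *\<^sub>R s) (pts N L)) [0..<N])"

lemma length_pts: "length (pts N L) = N ^ length L"
  by (induction L) (simp_all add: length_concat o_def sum_list_triv)

definition mean :: "nat \<Rightarrow> 'a::real_vector list \<Rightarrow> ('a \<Rightarrow> real) \<Rightarrow> real" where
  "mean N L g = sum_list (map g (pts N L)) / real (length (pts N L))"

lemma sum_list_concat_map:
  "sum_list (map g (concat (map h xs))) = (\<Sum>j\<leftarrow>xs. sum_list (map g (h j)))"
  by (induction xs) auto

lemma mean_cons:
  assumes "N > 0"
  shows "mean N (s # L) g = (\<Sum>j<N. mean N L (\<lambda>p. g (p + real j *\<^sub>R s))) / real N"
proof -
  have "sum_list (map g (pts N (s # L))) = (\<Sum>j\<leftarrow>[0..<N]. sum_list (map (\<lambda>p. g (p + real j *\<^sub>R s)) (pts N L)))"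
    by (simp add: sum_list_concat_map o_def)
  also have "\<dots> = (\<Sum>j<N. sum_list (map (\<lambda>p. g (p + real j *\<^sub>R s)) (pts N L)))"
    by (simp add: sum_list_map_eq_sum_count interv_sum_list_conv_sum_set_nat lessThan_atLeast0)
  finally have S: "sum_list (map g (pts N (s # L))) = (\<Sum>j<N. sum_list (map (\<lambda>p. g (p + real j *\<^sub>R s)) (pts N L)))" .
  have len: "length (pts N (s # L)) = N * length (pts N L)" by (simp only: length_pts) simp
  have pos: "real (length (pts N L)) > 0" using assms by (simp add: length_pts)
  show ?thesis
    unfolding mean_def S len using assms pos
    by (simp add: sum_divide_distrib[symmetric] field_simps)
qed

lemma sum_list_bounds:
  assumes "\<And>p. a \<le> g p" "\<And>p. g p \<le> b"
  shows "a * real (length xs) \<le> sum_list (map g xs) \<and> sum_list (map g xs) \<le> b * real (length xs)"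
  using assms by (induction xs) (auto simp: algebra_simps add_mono)

lemma mean_bounds:
  assumes "N > 0" "\<And>p. a \<le> g p" "\<And>p. g p \<le> b"
  shows "a \<le> mean N L g \<and> mean N L g \<le> b"
proof -
  have pos: "real (length (pts N L)) > 0" using assms(1) by (simp add: length_pts)
  show ?thesis using sum_list_bounds[of a g b "pts N L", OF assms(2,3)] pos
    by (simp add: mean_def field_simps)
qed

lemma mean_nonneg_bound:
  assumes "\<And>p. 0 \<le> g p" "\<And>p. g p \<le> b"
  shows "0 \<le> mean N L g \<and> mean N L g \<le> b"
proof (cases "N > 0")
  case True then show ?thesis using mean_bounds assms by blast
next
  case False
  then have "L \<noteq> [] \<Longrightarrow> length (pts N L) = 0" by (simp add: length_pts)
  moreover have "0 \<le> b" using assms order_trans by blast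
  ultimately show ?thesis using False by (cases L) (auto simp: mean_def assms)
qed

lemma mean_shift:
  assumes N: "N > 0" and B: "\<And>p. \<bar>g p\<bar> \<le> B" and t: "t \<in> set L"
  shows "\<bar>mean N L (\<lambda>p. g (p + t)) - mean N L g\<bar> \<le> 2 * B / real N"
  using B t
proof (induction L arbitrary: g)
  case Nil then show ?case by simp
next
  case (Cons s L)
  show ?case
  proof (cases "t = s")
    case True
    define m where "m j = mean N L (\<lambda>p. g (p + real j *\<^sub>R s))" for j
    have "mean N (s # L) (\<lambda>p. g (p + t)) = (\<Sum>j<N. m (Suc j)) / real N"
      unfolding mean_cons[OF N] m_def True
      by (simp add: algebra_simps)
    moreover have "mean N (s # L) g = (\<Sum>j<N. m j) / real N"
      unfolding mean_cons[OF N] m_def by simp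
    ultimately have E: "mean N (s # L) (\<lambda>p. g (p + t)) - mean N (s # L) g = (m N - m 0) / real N"
      by (simp add: diff_divide_distrib[symmetric] sum_subtractf[symmetric] sum_lessThan_telescope)
    have mb: "\<bar>m j\<bar> \<le> B" for j
    proof -
      have gb: "-B \<le> g q" "g q \<le> B" for q using Cons.prems(1)[of q] by linarith+
      have "-B \<le> m j \<and> m j \<le> B" unfolding m_def
        by (rule mean_bounds[OF N]) (rule gb)+
      then show ?thesis by (simp add: abs_le_iff)
    qed
    have A: "\<bar>m N - m 0\<bar> \<le> 2 * B" using mb[of N] mb[of 0] by linarith
    show ?thesis unfolding E using N A
      by (simp add: divide_right_mono)
  next
    case False
    then have tL: "t \<in> set L" using Cons.prems by simp
    define D where "D = (\<Sum>j<N. mean N L (\<lambda>p. g (p + real j *\<^sub>R s + t)) - mean N L (\<lambda>p. g (p + real j *\<^sub>R s)))"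
    have D1: "mean N (s # L) (\<lambda>p. g (p + t)) - mean N (s # L) g
       = (\<Sum>j<N. mean N L (\<lambda>p. g (p + real j *\<^sub>R s + t)) - mean N L (\<lambda>p. g (p + real j *\<^sub>R s))) / real N"
      unfolding mean_cons[OF N]
      by (simp add: diff_divide_distrib[symmetric] sum_subtractf algebra_simps)
    moreover have "\<bar>mean N L (\<lambda>p. g (p + real j *\<^sub>R s + t)) - mean N L (\<lambda>p. g (p + real j *\<^sub>R s))\<bar> \<le> 2 * B / real N" for j
      using Cons.IH[of "\<lambda>p. g (p + real j *\<^sub>R s)", OF _ tL] Cons.prems(1) by (simp add: add_ac)
    then have D2: "\<bar>\<Sum>j<N. mean N L (\<lambda>p. g (p + real j *\<^sub>R s + t)) - mean N L (\<lambda>p. g (p + real j *\<^sub>R s))\<bar> \<le> real N * (2 * B / real N)"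
      using sum_abs[of _ "{..<N}"] sum_bounded_above[of "{..<N}"]
      by (metis (no_types, lifting) card_lessThan order_trans)
    have "\<bar>D\<bar> / real N \<le> real N * (2 * B / real N) / real N"
      using D2 N unfolding D_def by (simp add: divide_right_mono)
    then show ?thesis using N unfolding D1 D_def[symmetric] by (simp add: abs_divide)
  qed
qed

definition lst :: "'a set \<Rightarrow> 'a list" where "lst S = (SOME L. set L = S)"

lemma set_lst: "finite S \<Longrightarrow> set (lst S) = S"
  unfolding lst_def by (rule someI_ex) (rule finite_list)

definition Femb :: "('a::real_normed_vector \<Rightarrow> 'b::real_normed_vector) \<Rightarrow> 'a \<Rightarrow> 'a set \<times> nat \<Rightarrow> nat \<Rightarrow> 'b" where
  "Femb f x i = (\<lambda>k. if k < length (pts (snd i) (lst (fst i)))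
      then (1 / real (length (pts (snd i) (lst (fst i))))) *\<^sub>R
           (f (x + pts (snd i) (lst (fst i)) ! k) - f (pts (snd i) (lst (fst i)) ! k)) else 0)"

lemma l1_fin:
  fixes v :: "nat \<Rightarrow> 'b::real_normed_vector"
  shows "(\<lambda>k. if k < n then c *\<^sub>R v k else 0) \<in> l1_sum \<and>
         l1_norm (\<lambda>k. if k < n then c *\<^sub>R v k else 0) = \<bar>c\<bar> * (\<Sum>k<n. norm (v k))"
proof -
  have z: "\<And>k. k \<notin> {..<n} \<Longrightarrow> norm (if k < n then c *\<^sub>R v k else 0) = 0" by auto
  show ?thesis
    unfolding l1_sum_def l1_norm_def
    using summable_finite[OF finite_lessThan z] suminf_finite[OF finite_lessThan z]
    by (simp add: sum_distrib_left)
qed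

lemma sum_list_nth': "sum_list (map h P) = (\<Sum>k<length P. h (P ! k))"
  by (simp add: sum_list_sum_nth lessThan_atLeast0)

lemma Femb_diff:
  fixes f :: "'a::real_normed_vector \<Rightarrow> 'b::real_normed_vector"
  shows "(\<lambda>k. Femb f x i k - Femb f y i k) \<in> l1_sum \<and>
    l1_norm (\<lambda>k. Femb f x i k - Femb f y i k) = mean (snd i) (lst (fst i)) (\<lambda>p. norm (f (x + p) - f (y + p)))"
proof -
  define P where "P = pts (snd i) (lst (fst i))"
  have e: "(\<lambda>k. Femb f x i k - Femb f y i k) = (\<lambda>k. if k < length P then (1 / real (length P)) *\<^sub>R (f (x + P ! k) - f (y + P ! k)) else 0)"
    unfolding Femb_def P_def[symmetric] by (auto simp: algebra_simps)
  show ?thesis unfolding e using l1_fin[of "length P" "1 / real (length P)" "\<lambda>k. f (x + P ! k) - f (y + P ! k)"]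
    by (simp add: mean_def P_def[symmetric] sum_list_nth')
qed

lemma Femb_norm:
  fixes f :: "'a::real_normed_vector \<Rightarrow> 'b::real_normed_vector"
  shows "Femb f x i \<in> l1_sum \<and>
    l1_norm (Femb f x i) = mean (snd i) (lst (fst i)) (\<lambda>p. norm (f (x + p) - f p))"
proof -
  define P where "P = pts (snd i) (lst (fst i))"
  have e: "Femb f x i = (\<lambda>k. if k < length P then (1 / real (length P)) *\<^sub>R (f (x + P ! k) - f (P ! k)) else 0)"
    unfolding Femb_def P_def[symmetric] by (auto simp: algebra_simps)
  show ?thesis unfolding e using l1_fin[of "length P" "1 / real (length P)" "\<lambda>k. f (x + P ! k) - f (P ! k)"]
    by (simp add: mean_def P_def[symmetric] sum_list_nth')
qed

theorem theorem3p1: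
  fixes f :: "'a::banach \<Rightarrow> 'b::banach"
  assumes "coarse_map f"
  shows "\<exists>(I :: ('a set \<times> nat) set) U (F :: 'a \<Rightarrow> ('a set \<times> nat) \<Rightarrow> nat \<Rightarrow> 'b).
           ultrafilter_on I U \<and> nonprincipal U \<and> (\<forall>x. F x \<in> ultrapower_reps I) \<and>
           (\<forall>x y. rho_mod f (norm (x - y)) \<le> ultrapower_norm U (\<lambda>i. F x i - F y i) \<and>
                  ultrapower_norm U (\<lambda>i. F x i - F y i) \<le> omega_mod f (norm (x - y)) \<and>
                  ultrapower_norm U (\<lambda>i. F x i - F y i) = ultrapower_norm U (F (x - y)))"
proof -
  define Q :: "('a set \<times> nat \<Rightarrow> bool) \<Rightarrow> bool" where "Q = (\<lambda>P. \<exists>S0 N0. finite S0 \<and> (\<forall>S N. finite S \<and> S0 \<subseteq> S \<and> N0 \<le> N \<longrightarrow> P (S, N)))"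
  have isf: "is_filter Q"
  proof (rule is_filter.intro)
    show "Q (\<lambda>x. True)" unfolding Q_def by (rule exI[of _ "{}"]) simp
  next
    fix P R assume a: "Q (\<lambda>x. P x)" "Q (\<lambda>x. R x)"
    obtain S0 N0 where 1: "finite S0" "\<And>S N. finite S \<Longrightarrow> S0 \<subseteq> S \<Longrightarrow> N0 \<le> N \<Longrightarrow> P (S, N)"
      using a(1) unfolding Q_def by blast
    obtain S1 N1 where 2: "finite S1" "\<And>S N. finite S \<Longrightarrow> S1 \<subseteq> S \<Longrightarrow> N1 \<le> N \<Longrightarrow> R (S, N)"
      using a(2) unfolding Q_def by blast
    show "Q (\<lambda>x. P x \<and> R x)" unfolding Q_def
      by (rule exI[of _ "S0 \<union> S1"], rule exI[of _ "max N0 N1"]) (simp add: 1 2)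
  next
    fix P R assume "\<forall>x. P x \<longrightarrow> R x" "Q (\<lambda>x. P x)"
    then show "Q (\<lambda>x. R x)" unfolding Q_def by meson
  qed
  define FB where "FB = Abs_filter Q"
  have evFB: "eventually P FB \<longleftrightarrow> Q P" for P unfolding FB_def using eventually_Abs_filter[OF isf] .
  have "FB \<noteq> bot"
  proof
    assume "FB = bot"
    then have "Q (\<lambda>x. False)" using evFB[of "\<lambda>x. False"] by simp
    then show False unfolding Q_def by blast
  qed
  then obtain U where U: "U \<le> FB" "U \<noteq> bot" "\<forall>P. eventually P U \<or> eventually (\<lambda>x. \<not> P x) U"
    using ex_ultra by blast
  have evU: "eventually (\<lambda>i. finite (fst i) \<and> S0 \<subseteq> fst i \<and> N0 \<le> snd i) U" if "finite S0" for S0 N0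
  proof -
    have "eventually (\<lambda>i. finite (fst i) \<and> S0 \<subseteq> fst i \<and> N0 \<le> snd i) FB"
      unfolding evFB Q_def using that by auto
    then show ?thesis using U(1) filter_leD by blast
  qed
  define F where "F = Femb f"
  have om0: "0 \<le> omega_mod f t" "norm (f a - f b) \<le> omega_mod f t" if "norm (a - b) \<le> t" for a b t
  proof -
    have t: "t \<ge> 0" using that norm_ge_zero order_trans by blast
    have bdd: "bdd_above {norm (f x - f y) | x y. norm (x - y) \<le> t}"
      using assms t unfolding coarse_map_def by simp
    show "norm (f a - f b) \<le> omega_mod f t" unfolding omega_mod_def
      by (rule cSup_upper[OF _ bdd]) (use that in blast)
    then show "0 \<le> omega_mod f t" using norm_ge_zero order_trans by blast
  qed
  have rh: "rho_mod f t \<le> norm (f a - f b)" if "t \<le> norm (a - b)" for a b t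
    unfolding rho_mod_def
    by (rule cInf_lower) (use that in \<open>auto intro: bdd_belowI[of _ 0]\<close>)
  have ultra: "ultrafilter_on UNIV U" unfolding ultrafilter_on_def using U by simp
  moreover have "nonprincipal U" unfolding nonprincipal_def
  proof
    fix j :: "'a set \<times> nat"
    show "eventually (\<lambda>i. i \<noteq> j) U"
      using evU[of "{}" "Suc (snd j)", OF finite.emptyI] by (rule eventually_mono) auto
  qed
  moreover have "F x \<in> ultrapower_reps UNIV" for x
  proof -
    have "l1_norm (F x i) \<le> omega_mod f (norm x)" for i
      unfolding F_def Femb_norm[THEN conjunct2]
      by (rule mean_nonneg_bound[THEN conjunct2]) (auto intro: om0)
    then show ?thesis unfolding ultrapower_reps_def using Femb_norm F_def by blast
  qed
  moreover have "rho_mod f (norm (x - y)) \<le> ultrapower_norm U (\<lambda>i. F x i - F y i) \<and>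
                  ultrapower_norm U (\<lambda>i. F x i - F y i) \<le> omega_mod f (norm (x - y)) \<and>
                  ultrapower_norm U (\<lambda>i. F x i - F y i) = ultrapower_norm U (F (x - y))" for x y
  proof -
    define B where "B = omega_mod f (norm (x - y))"
    define h1 where "h1 p = norm (f (x + p) - f (y + p))" for p
    define h2 where "h2 p = norm (f (x - y + p) - f p)" for p
    define g1 where "g1 i = mean (snd i) (lst (fst i)) h1" for i :: "'a set \<times> nat"
    define g2 where "g2 i = mean (snd i) (lst (fst i)) h2" for i :: "'a set \<times> nat"
    have h1b: "0 \<le> h1 p" "h1 p \<le> B" "rho_mod f (norm (x - y)) \<le> h1 p" for p
      unfolding h1_def B_def by (auto intro!: om0 rh)
    have h2b: "\<bar>h2 p\<bar> \<le> B" for p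
      unfolding h2_def B_def by (auto intro!: om0)
    have h12: "h1 = (\<lambda>p. h2 (p + y))" unfolding h1_def h2_def by (auto simp: algebra_simps)
    have e1: "ultrapower_norm U (\<lambda>i. F x i - F y i) = Lim U g1"
      unfolding ultrapower_norm_def g1_def h1_def F_def
      by (simp add: fun_diff_def Femb_diff[THEN conjunct2])
    have e2: "ultrapower_norm U (F (x - y)) = Lim U g2"
      unfolding ultrapower_norm_def g2_def h2_def F_def
      by (simp add: Femb_norm[THEN conjunct2])
    have B0: "0 \<le> B" using h1b order_trans by blast
    have g1b: "0 \<le> g1 i \<and> g1 i \<le> B" for i
      unfolding g1_def by (rule mean_nonneg_bound) (use h1b in auto)
    have g2b: "\<bar>g2 i\<bar> \<le> B" for i
      using mean_nonneg_bound[of h2 B] h2b unfolding g2_def h2_def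
      by (auto simp: abs_le_iff)
    have t1: "(g1 \<longlongrightarrow> Lim U g1) U"
      by (rule ultra_tendsto[OF U(2,3)]) (use g1b in \<open>auto intro!: always_eventually\<close>)
    have t2: "(g2 \<longlongrightarrow> Lim U g2) U"
      by (rule ultra_tendsto[OF U(2,3)]) (use g2b in \<open>auto intro!: always_eventually\<close>)
    have lo: "eventually (\<lambda>i. rho_mod f (norm (x - y)) \<le> g1 i) U"
      using evU[of "{}" 1, OF finite.emptyI]
    proof (rule eventually_mono)
      fix i :: "'a set \<times> nat" assume "finite (fst i) \<and> {} \<subseteq> fst i \<and> 1 \<le> snd i"
      then show "rho_mod f (norm (x - y)) \<le> g1 i" unfolding g1_def
        using mean_bounds[of "snd i" "rho_mod f (norm (x - y))" h1 B] h1b by auto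
    qed
    have L1: "rho_mod f (norm (x - y)) \<le> Lim U g1"
      by (rule tendsto_lowerbound[OF t1 lo U(2)])
    have L2: "Lim U g1 \<le> B"
      by (rule tendsto_upperbound[OF t1 _ U(2)]) (use g1b in \<open>auto intro!: always_eventually\<close>)
    have L3: "\<bar>Lim U g1 - Lim U g2\<bar> \<le> e" if e: "e > 0" for e
    proof -
      obtain N0 :: nat where N0: "2 * B / e < real N0" using reals_Archimedean2 by blast
      have "eventually (\<lambda>i. \<bar>g1 i - g2 i\<bar> \<le> e) U"
        using evU[of "{y}" "Suc N0", OF finite_insert[THEN iffD2, OF finite.emptyI]]
      proof (rule eventually_mono)
        fix i :: "'a set \<times> nat" assume i: "finite (fst i) \<and> {y} \<subseteq> fst i \<and> Suc N0 \<le> snd i"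
        then have yin: "y \<in> set (lst (fst i))" using set_lst by auto
        have Np: "snd i > 0" using i by auto
        have "\<bar>g1 i - g2 i\<bar> \<le> 2 * B / real (snd i)"
          unfolding g1_def g2_def h12 by (rule mean_shift[OF Np h2b yin])
        also have "\<dots> \<le> e"
        proof -
          have "2 * B / e < real (snd i)" using N0 i by linarith
          then show ?thesis using e Np by (simp add: field_simps)
        qed
        finally show "\<bar>g1 i - g2 i\<bar> \<le> e" .
      qed
      moreover have "((\<lambda>i. \<bar>g1 i - g2 i\<bar>) \<longlongrightarrow> \<bar>Lim U g1 - Lim U g2\<bar>) U"
        by (intro tendsto_intros t1 t2)
      ultimately show ?thesis using tendsto_upperbound U(2) by blast
    qed
    have "Lim U g1 = Lim U g2"
    proof (rule ccontr)
      assume "Lim U g1 \<noteq> Lim U g2"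
      then have "\<bar>Lim U g1 - Lim U g2\<bar> > 0" by simp
      then have "\<bar>Lim U g1 - Lim U g2\<bar> \<le> \<bar>Lim U g1 - Lim U g2\<bar> / 2" using L3[of "\<bar>Lim U g1 - Lim U g2\<bar> / 2"] by simp
      then show False using \<open>\<bar>Lim U g1 - Lim U g2\<bar> > 0\<close> by simp
    qed
    then show ?thesis using L1 L2 e1 e2 B_def by simp
  qed
  ultimately show ?thesis by blast
qed

end
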